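(* Consider $n$ agents with responsibilities $(b_1,\ldots,b_n)$ and $m$ chores $e_1,\ldots,e_m$. Let $A=(A_1,\ldots,A_n)$ be any allocation, and let $\pi$ be the associated picking sequence in which agent $i$ picks exactly in those rounds $r$ with $e_{m-r+1}\in A_i$. Let $\rho_i(A)$ be the supremum of $c_i(A_i)/APS_i$ over all additive disvaluations $c_i$ with $c_i(e_j)\ge c_i(e_k)$ for all $j<k$. Let $\rho_i(\pi)$ be the supremum, over all additive disvaluations $c_i$ and all disvaluations and picking strategies of the other agents, of $c_i(B_i)/APS_i$, where $B_i$ is the bundle received by agent $i$ following the greedy picking strategy in $\pi$. Then $\rho_i(A)=\rho_i(\pi)$. The same equality holds with $APS_i$ replaced by $CS_i$, and, when all responsibilities equal $1/n$, with $APS_i$ replaced by $MMS_i$.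
   Context: Picking sequence: in round $r$ agent $\pi_r$ takes one remaining chore. Greedy: take remaining chore of smallest own disvalue. $APS_i=\max_p\min\{c_i(S):\sum_{e\in S}p_e\ge b_i\}$ over nonnegative price vectors summing to $1$. $CS_i=\max\{b_ic_i(\mathcal M),d_1,d_k+d_{k+1}\}$, $k=\lfloor 1/b_i\rfloor$, $d_1\ge d_2\ge\cdots$ the disvalues under $c_i$ sorted non-increasingly (padded with zeros). $MMS_i=\min_{(A_1,\ldots,A_n)}\max_jc_i(A_j)$ over partitions of the chores into $n$ bundles. *)

theory Defs
  imports Complex_Main "HOL-Library.FuncSet" "HOL-Library.Extended_Real"
begin

text \<open>Agents are 1..n, chores are e_1..e_m, represented by the numbers 1..m.
  A disvaluation is an additive function given by its values c e (e in 1..m), c e >= 0.\<close>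

definition disvaluation :: "nat \<Rightarrow> (nat \<Rightarrow> real) \<Rightarrow> bool" where
  "disvaluation m c \<longleftrightarrow> (\<forall>e\<in>{1..m}. 0 \<le> c e)"

definition aps :: "real \<Rightarrow> nat \<Rightarrow> (nat \<Rightarrow> real) \<Rightarrow> real" where
  "aps b m c = (SUP p \<in> {p. (\<forall>e\<in>{1..m}. 0 \<le> p e) \<and> sum p {1..m} = 1}.
                  Min {sum c S | S. S \<subseteq> {1..m} \<and> b \<le> sum p S})"

definition dsorted :: "nat \<Rightarrow> (nat \<Rightarrow> real) \<Rightarrow> nat \<Rightarrow> real" where
  "dsorted m c j = (let ds = rev (sort (map c [1..<m+1])) in
                     if 1 \<le> j \<and> j \<le> length ds then ds ! (j - 1) else 0)"

definition cs :: "real \<Rightarrow> nat \<Rightarrow> (nat \<Rightarrow> real) \<Rightarrow> real" where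
  "cs b m c = (let k = nat \<lfloor>1 / b\<rfloor> in
     max (b * sum c {1..m}) (max (dsorted m c 1) (dsorted m c k + dsorted m c (k + 1))))"

text \<open>Maximin share: min over partitions of the chores into n bundles (functions
  from chores to agents) of the maximum picked_bundle cost.\<close>
definition mms :: "nat \<Rightarrow> nat \<Rightarrow> (nat \<Rightarrow> real) \<Rightarrow> real" where
  "mms n m c = Min ((\<lambda>f. Max ((\<lambda>j. sum c {e\<in>{1..m}. f e = j}) ` {1..n}))
                      ` ({1..m} \<rightarrow>\<^sub>E {1..n}))"

definition rho_alloc :: "((nat \<Rightarrow> real) \<Rightarrow> real) \<Rightarrow> (nat \<Rightarrow> nat set) \<Rightarrow> nat \<Rightarrow> nat \<Rightarrow> ereal" where
  "rho_alloc share A i m =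
     (SUP c \<in> {c. disvaluation m c \<and> (\<forall>j k. 1 \<le> j \<longrightarrow> j < k \<longrightarrow> k \<le> m \<longrightarrow> c k \<le> c j)}.
        ereal (sum c (A i) / share c))"

text \<open>A picking strategy maps the history (list of chores picked so far) to a
  remaining chore.\<close>
definition valid_strategy :: "nat \<Rightarrow> (nat list \<Rightarrow> nat) \<Rightarrow> bool" where
  "valid_strategy m s \<longleftrightarrow>
     (\<forall>h. distinct h \<and> set h \<subseteq> {1..m} \<and> length h < m \<longrightarrow> s h \<in> {1..m} - set h)"

definition greedy_strategy :: "nat \<Rightarrow> (nat \<Rightarrow> real) \<Rightarrow> (nat list \<Rightarrow> nat) \<Rightarrow> bool" where
  "greedy_strategy m c s \<longleftrightarrow> valid_strategy m s \<and>
     (\<forall>h. distinct h \<and> set h \<subseteq> {1..m} \<and> length h < m \<longrightarrow>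
          (\<forall>e\<in>{1..m} - set h. c (s h) \<le> c e))"

text \<open>History after r rounds: in round r agent seq r picks.\<close>
fun history :: "(nat \<Rightarrow> nat) \<Rightarrow> (nat \<Rightarrow> nat list \<Rightarrow> nat) \<Rightarrow> nat \<Rightarrow> nat list" where
  "history seq \<sigma> 0 = []"
| "history seq \<sigma> (Suc r) = history seq \<sigma> r @ [\<sigma> (seq (Suc r)) (history seq \<sigma> r)]"

definition picked_bundle :: "(nat \<Rightarrow> nat) \<Rightarrow> (nat \<Rightarrow> nat list \<Rightarrow> nat) \<Rightarrow> nat \<Rightarrow> nat \<Rightarrow> nat set" where
  "picked_bundle seq \<sigma> m i = {history seq \<sigma> m ! (r - 1) | r. r \<in> {1..m} \<and> seq r = i}"

definition rho_pi :: "((nat \<Rightarrow> real) \<Rightarrow> real) \<Rightarrow> (nat \<Rightarrow> nat) \<Rightarrow> nat \<Rightarrow> nat \<Rightarrow> nat \<Rightarrow> ereal" where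
  "rho_pi share seq i m n =
     (SUP (c, \<sigma>) \<in> {(c, \<sigma>). disvaluation m c \<and> greedy_strategy m c (\<sigma> i) \<and>
                        (\<forall>j\<in>{1..n}. valid_strategy m (\<sigma> j))}.
        ereal (sum c (picked_bundle seq \<sigma> m i) / share c))"

end

theory Submission imports Defs "HOL-Library.Multiset" begin

lemma hist_len[simp]: "length (history seq \<sigma> k) = k"
  by (induction k) auto

lemma hist_nth: "j < k \<Longrightarrow> history seq \<sigma> k ! j = \<sigma> (seq (Suc j)) (history seq \<sigma> j)"
proof (induction k)
  case 0 then show ?case by simp
next
  case (Suc k)
  show ?case
  proof (cases "j < k")
    case True then show ?thesis using Suc by (simp add: nth_append)
  next
    case False then have "j = k" using Suc by simp
    then show ?thesis by (simp add: nth_append)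
  qed
qed

lemma hist_good:
  assumes "\<forall>r\<in>{1..m}. seq r \<in> {1..n}" "\<forall>j\<in>{1..n}. valid_strategy m (\<sigma> j)" "k \<le> m"
  shows "distinct (history seq \<sigma> k) \<and> set (history seq \<sigma> k) \<subseteq> {1..m}"
  using assms(3)
proof (induction k)
  case 0 then show ?case by simp
next
  case (Suc k)
  let ?h = "history seq \<sigma> k"
  have "seq (Suc k) \<in> {1..n}" using assms(1) Suc.prems by auto
  then have v: "valid_strategy m (\<sigma> (seq (Suc k)))" using assms(2) by auto
  have ih: "distinct ?h \<and> set ?h \<subseteq> {1..m}" using Suc by simp
  have "\<sigma> (seq (Suc k)) ?h \<in> {1..m} - set ?h"
    using v ih Suc.prems unfolding valid_strategy_def by auto
  then show ?case using ih by auto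
qed

lemma sorting_perm:
  fixes c :: "nat \<Rightarrow> real"
  shows "\<exists>\<tau>. bij_betw \<tau> {1..m} {1..m} \<and> (\<forall>j k. 1 \<le> j \<longrightarrow> j < k \<longrightarrow> k \<le> m \<longrightarrow> c (\<tau> k) \<le> c (\<tau> j))"
proof -
  define xs where "xs = sort_key (\<lambda>e. - c e) [1..<m+1]"
  have d: "distinct xs" unfolding xs_def by simp
  have l: "length xs = m" unfolding xs_def by simp
  have s: "set xs = {1..m}" unfolding xs_def by auto
  have so: "sorted (map (\<lambda>e. - c e) xs)" unfolding xs_def by simp
  define \<tau> where "\<tau> j = xs ! (j - 1)" for j
  have b1: "bij_betw ((!) xs) {..<m} {1..m}" using bij_betw_nth[OF d] l s by simp
  have b2: "bij_betw (\<lambda>j. j - 1) {1..m} {..<m}"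
    by (rule bij_betw_byWitness[where f'="\<lambda>j. j + 1"]) auto
  have "bij_betw \<tau> {1..m} {1..m}"
    using bij_betw_trans[OF b2 b1] unfolding \<tau>_def comp_def by simp
  moreover have "\<forall>j k. 1 \<le> j \<longrightarrow> j < k \<longrightarrow> k \<le> m \<longrightarrow> c (\<tau> k) \<le> c (\<tau> j)"
  proof (intro allI impI)
    fix j k :: nat assume "1 \<le> j" "j < k" "k \<le> m"
    then have "(map (\<lambda>e. - c e) xs) ! (j - 1) \<le> (map (\<lambda>e. - c e) xs) ! (k - 1)"
      using so l by (intro sorted_nth_mono) auto
    then show "c (\<tau> k) \<le> c (\<tau> j)" using \<open>1 \<le> j\<close> \<open>j < k\<close> \<open>k \<le> m\<close> l unfolding \<tau>_def by simp
  qed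
  ultimately show ?thesis by blast
qed


lemma hist_max:
  "k \<le> m \<Longrightarrow> history seq (\<lambda>j h. Max ({1..m} - set h)) k = map (\<lambda>j. m - j) [0..<k]"
proof (induction k)
  case 0 then show ?case by simp
next
  case (Suc k)
  then have ih: "history seq (\<lambda>j h. Max ({1..m} - set h)) k = map (\<lambda>j. m - j) [0..<k]" by simp
  have "Max ({1..m} - (\<lambda>j. m - j) ` {0..<k}) = m - k"
  proof (rule Max_eqI)
    show "m - k \<in> {1..m} - (\<lambda>j. m - j) ` {0..<k}" using Suc.prems by auto
  next
    fix y assume "y \<in> {1..m} - (\<lambda>j. m - j) ` {0..<k}"
    then have y: "1 \<le> y" "y \<le> m" "\<forall>j<k. y \<noteq> m - j" by auto
    show "y \<le> m - k"
    proof (rule ccontr)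
      assume "\<not> y \<le> m - k"
      then have "m - y < k" "y = m - (m - y)" using y by auto
      then show False using y(3) by blast
    qed
  qed auto
  then show ?case using ih by simp
qed


lemma inv_from_le:
  assumes cong: "\<And>c c'. (\<forall>e\<in>{1..m}. c e = c' e) \<Longrightarrow> s c = s c'"
    and le: "\<And>c \<tau>. bij_betw \<tau> {1..m} {1..m} \<Longrightarrow> (s (c \<circ> \<tau>) :: real) \<le> s c"
    and tb: "bij_betw \<tau> {1..m} {1..m}"
  shows "s (c \<circ> \<tau>) = s c"
proof -
  define \<tau>' where "\<tau>' = inv_into {1..m} \<tau>"
  have tb': "bij_betw \<tau>' {1..m} {1..m}" unfolding \<tau>'_def by (rule bij_betw_inv_into[OF tb])
  have "s c = s ((c \<circ> \<tau>) \<circ> \<tau>')"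
    by (rule cong) (use tb in \<open>auto simp: \<tau>'_def bij_betw_inv_into_right\<close>)
  also have "\<dots> \<le> s (c \<circ> \<tau>)" by (rule le[OF tb'])
  finally show ?thesis using le[OF tb, of c] by simp
qed

lemma inv_from_ge:
  assumes cong: "\<And>c c'. (\<forall>e\<in>{1..m}. c e = c' e) \<Longrightarrow> s c = s c'"
    and ge: "\<And>c \<tau>. bij_betw \<tau> {1..m} {1..m} \<Longrightarrow> (s c :: real) \<le> s (c \<circ> \<tau>)"
    and tb: "bij_betw \<tau> {1..m} {1..m}"
  shows "s (c \<circ> \<tau>) = s c"
proof -
  define \<tau>' where "\<tau>' = inv_into {1..m} \<tau>"
  have tb': "bij_betw \<tau>' {1..m} {1..m}" unfolding \<tau>'_def by (rule bij_betw_inv_into[OF tb])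
  have "s (c \<circ> \<tau>) \<le> s ((c \<circ> \<tau>) \<circ> \<tau>')" by (rule ge[OF tb'])
  also have "\<dots> = s c"
    by (rule cong) (use tb in \<open>auto simp: \<tau>'_def bij_betw_inv_into_right\<close>)
  finally show ?thesis using ge[OF tb, of c] by simp
qed

lemma cs_inv:
  assumes tb: "bij_betw \<tau> {1..m} {1..m}"
  shows "cs b m (c \<circ> \<tau>) = cs b m c"
proof -
  have s: "sum (c \<circ> \<tau>) {1..m} = sum c {1..m}"
    using sum.reindex_bij_betw[OF tb, of c] by (simp add: comp_def)
  have "image_mset \<tau> (mset_set {1..<m+1}) = mset_set (\<tau> ` {1..<m+1})"
    using tb unfolding bij_betw_def by (intro image_mset_mset_set) (auto simp: atLeastLessThanSuc_atLeastAtMost)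
  also have "\<tau> ` {1..<m+1} = {1..<m+1}" using tb unfolding bij_betw_def by (auto simp: atLeastLessThanSuc_atLeastAtMost)
  finally have im: "image_mset \<tau> (mset_set {1..<m+1}) = mset_set {1..<m+1}" .
  have "mset (map (c \<circ> \<tau>) [1..<m+1]) = mset (map c [1..<m+1])"
    by (simp only: mset_map mset_upt multiset.map_comp[symmetric] im)
  then have "sort (map (c \<circ> \<tau>) [1..<m+1]) = sort (map c [1..<m+1])"
    by (intro properties_for_sort) auto
  then have "dsorted m (c \<circ> \<tau>) = dsorted m c"
    unfolding dsorted_def by (intro ext) (simp only: length_rev length_sort)
  then show ?thesis unfolding cs_def using s by simp
qed

lemma cs_nonneg:
  assumes "0 < b" "disvaluation m c"
  shows "0 \<le> cs b m c"
proof -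
  have "0 \<le> sum c {1..m}" using assms(2) unfolding disvaluation_def by (intro sum_nonneg) auto
  then have "0 \<le> b * sum c {1..m}" using assms(1) by simp
  then show ?thesis unfolding cs_def Let_def by linarith
qed


lemma mms_cong:
  assumes "\<forall>e\<in>{1..m}. c e = c' e"
  shows "mms n m c = mms n m c'"
proof -
  have h: "Max ((\<lambda>j. sum c {e\<in>{1..m}. f e = j}) ` {1..n}) = Max ((\<lambda>j. sum c' {e\<in>{1..m}. f e = j}) ` {1..n})" for f :: "nat \<Rightarrow> nat"
  proof -
    have "(\<lambda>j. sum c {e\<in>{1..m}. f e = j}) = (\<lambda>j. sum c' {e\<in>{1..m}. f e = j})"
      using assms by (intro ext sum.cong) auto
    then show ?thesis by (rule arg_cong)
  qed
  have "(\<lambda>f. Max ((\<lambda>j. sum c {e\<in>{1..m}. f e = j}) ` {1..n})) = (\<lambda>f. Max ((\<lambda>j. sum c' {e\<in>{1..m}. f e = j}) ` {1..n}))"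
    by (rule ext) (rule h)
  then show ?thesis unfolding mms_def by (rule arg_cong)
qed

lemma mms_le:
  assumes tb: "bij_betw \<tau> {1..m} {1..m}"
  shows "mms n m (c \<circ> \<tau>) \<le> mms n m c"
proof -
  define F where "F = {1..m} \<rightarrow>\<^sub>E {1..n}"
  define val where "val (c::nat \<Rightarrow> real) f = Max ((\<lambda>j. sum c {e\<in>{1..m}. f e = j}) ` {1..n})" for c and f :: "nat \<Rightarrow> nat"
  have mm: "mms n m c = Min (val c ` F)" for c unfolding mms_def val_def F_def by simp
  show ?thesis
  proof (cases "F = {}")
    case True then show ?thesis unfolding mm by simp
  next
    case False
    have sub: "val c ` F \<subseteq> val (c \<circ> \<tau>) ` F"
    proof
      fix x assume "x \<in> val c ` F"
      then obtain f where f: "f \<in> F" "x = val c f" by blast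
      define f' where "f' = restrict (f \<circ> \<tau>) {1..m}"
      have "f (\<tau> e) \<in> {1..n}" if "e \<in> {1..m}" for e
      proof -
        have "\<tau> e \<in> {1..m}" using tb that unfolding bij_betw_def by auto
        then show ?thesis using PiE_mem[OF f(1)[unfolded F_def]] by blast
      qed
      then have f'F: "f' \<in> F" unfolding F_def f'_def by auto
      have "sum (c \<circ> \<tau>) {e\<in>{1..m}. f' e = j} = sum c {e\<in>{1..m}. f e = j}" for j
      proof -
        have inj: "inj_on \<tau> {e\<in>{1..m}. f' e = j}"
          using tb unfolding bij_betw_def by (rule inj_on_subset[OF conjunct1]) auto
        have img: "\<tau> ` {e\<in>{1..m}. f' e = j} = {e\<in>{1..m}. f e = j}"
        proof (intro equalityI subsetI)
          fix y assume "y \<in> \<tau> ` {e\<in>{1..m}. f' e = j}"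
          then obtain e where "e \<in> {1..m}" "f' e = j" "y = \<tau> e" by blast
          then show "y \<in> {e\<in>{1..m}. f e = j}" using tb unfolding f'_def bij_betw_def by auto
        next
          fix y assume y: "y \<in> {e\<in>{1..m}. f e = j}"
          then have "y \<in> \<tau> ` {1..m}" using tb unfolding bij_betw_def by auto
          then obtain e where "e \<in> {1..m}" "y = \<tau> e" by blast
          then show "y \<in> \<tau> ` {e\<in>{1..m}. f' e = j}" using y unfolding f'_def by auto
        qed
        show ?thesis using sum.reindex[OF inj, of c] img by simp
      qed
      then have "val (c \<circ> \<tau>) f' = val c f" unfolding val_def by simp
      then show "x \<in> val (c \<circ> \<tau>) ` F" using f f'F by (metis image_eqI)
    qed
    have fin: "finite F" unfolding F_def by (simp add: finite_PiE)
    show ?thesis unfolding mm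
      by (rule Min_antimono[OF sub]) (use False fin in auto)
  qed
qed

lemma mms_inv:
  assumes "bij_betw \<tau> {1..m} {1..m}"
  shows "mms n m (c \<circ> \<tau>) = mms n m c"
  by (rule inv_from_le[where s="mms n m"]) (use mms_cong mms_le assms in auto)

lemma mms_nonneg:
  assumes "1 \<le> n" "disvaluation m c"
  shows "0 \<le> mms n m c"
proof -
  define F where "F = {1..m} \<rightarrow>\<^sub>E {1..n}"
  define val where "val f = Max ((\<lambda>j. sum c {e\<in>{1..m}. f e = j}) ` {1..n})" for f :: "nat \<Rightarrow> nat"
  have mm: "mms n m c = Min (val ` F)" unfolding mms_def val_def F_def by simp
  have "(\<lambda>e. if e \<in> {1..m} then 1 else undefined) \<in> F" unfolding F_def using assms(1) by auto
  then have ne: "F \<noteq> {}" by blast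
  have fin: "finite F" unfolding F_def by (simp add: finite_PiE)
  have "Min (val ` F) \<in> val ` F" using ne fin by (intro Min_in) auto
  then obtain f where f: "Min (val ` F) = val f" by blast
  have "0 \<le> sum c {e\<in>{1..m}. f e = 1}" using assms(2) unfolding disvaluation_def by (intro sum_nonneg) auto
  also have "\<dots> \<le> val f" unfolding val_def using assms(1) by (intro Max_ge) auto
  finally show ?thesis using mm f by simp
qed


lemma aps_cong:
  assumes "\<forall>e\<in>{1..m}. c e = c' e"
  shows "aps b m c = aps b m c'"
proof -
  have h: "Min {sum c S | S. S \<subseteq> {1..m} \<and> b \<le> sum p S} = Min {sum c' S | S. S \<subseteq> {1..m} \<and> b \<le> sum p S}"
    for p :: "nat \<Rightarrow> real"
  proof -
    have "{sum c S | S. S \<subseteq> {1..m} \<and> b \<le> sum p S} = {sum c' S | S. S \<subseteq> {1..m} \<and> b \<le> sum p S}"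
    proof (intro equalityI subsetI)
      fix x assume "x \<in> {sum c S | S. S \<subseteq> {1..m} \<and> b \<le> sum p S}"
      then obtain S where S: "S \<subseteq> {1..m}" "b \<le> sum p S" "x = sum c S" by blast
      then have "x = sum c' S" using assms by (auto intro!: sum.cong)
      then show "x \<in> {sum c' S | S. S \<subseteq> {1..m} \<and> b \<le> sum p S}" using S by blast
    next
      fix x assume "x \<in> {sum c' S | S. S \<subseteq> {1..m} \<and> b \<le> sum p S}"
      then obtain S where S: "S \<subseteq> {1..m}" "b \<le> sum p S" "x = sum c' S" by blast
      then have "x = sum c S" using assms by (auto intro!: sum.cong)
      then show "x \<in> {sum c S | S. S \<subseteq> {1..m} \<and> b \<le> sum p S}" using S by blast
    qed
    then show ?thesis by simp
  qed
  have "(\<lambda>p. Min {sum c S | S. S \<subseteq> {1..m} \<and> b \<le> sum p S}) = (\<lambda>p. Min {sum c' S | S. S \<subseteq> {1..m} \<and> b \<le> sum p S})"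
    by (rule ext) (rule h)
  then show ?thesis unfolding aps_def by (rule arg_cong)
qed

lemma aps_M_finite:
  fixes m :: nat and c p :: "nat \<Rightarrow> real"
  shows "finite {sum c S | S. S \<subseteq> {1..m} \<and> b \<le> sum p S}"
proof -
  have "{sum c S | S. S \<subseteq> {1..m} \<and> b \<le> sum p S} \<subseteq> sum c ` Pow {1..m}" by auto
  moreover have "finite (sum c ` Pow {1..m})" by (intro finite_imageI) simp
  ultimately show ?thesis by (rule finite_subset)
qed

lemma aps_M_bound:
  fixes m :: nat and c p :: "nat \<Rightarrow> real"
  assumes "b \<le> 1" "(\<forall>e\<in>{1..m}. 0 \<le> p e) \<and> sum p {1..m} = 1"
  shows "Min {sum c S | S. S \<subseteq> {1..m} \<and> b \<le> sum p S} \<le> sum c {1..m}"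
    and "{sum c S | S. S \<subseteq> {1..m} \<and> b \<le> sum p S} \<noteq> {}"
proof -
  have mem: "sum c {1..m} \<in> {sum c S | S. S \<subseteq> {1..m} \<and> b \<le> sum p S}" using assms by auto
  show "Min {sum c S | S. S \<subseteq> {1..m} \<and> b \<le> sum p S} \<le> sum c {1..m}"
    by (rule Min_le[OF aps_M_finite mem])
  show "{sum c S | S. S \<subseteq> {1..m} \<and> b \<le> sum p S} \<noteq> {}" using mem by blast
qed

lemma aps_ge:
  assumes b1: "b \<le> 1" and tb: "bij_betw \<tau> {1..m} {1..m}"
  shows "aps b m c \<le> aps b m (c \<circ> \<tau>)"
proof -
  define P where "P = {p :: nat \<Rightarrow> real. (\<forall>e\<in>{1..m}. 0 \<le> p e) \<and> sum p {1..m} = 1}"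
  define M where "M c p = Min {sum c S | S. S \<subseteq> {1..m} \<and> b \<le> sum p S}" for c :: "nat \<Rightarrow> real" and p :: "nat \<Rightarrow> real"
  have aa: "aps b m c = (SUP p\<in>P. M c p)" for c unfolding aps_def P_def M_def by simp
  show ?thesis
  proof (cases "P = {}")
    case True then show ?thesis unfolding aa by simp
  next
    case False
    show ?thesis unfolding aa
    proof (rule cSUP_mono[OF False])
      show "bdd_above (M (c \<circ> \<tau>) ` P)"
      proof (rule bdd_aboveI2[where M="sum (c \<circ> \<tau>) {1..m}"])
        fix p assume "p \<in> P"
        then show "M (c \<circ> \<tau>) p \<le> sum (c \<circ> \<tau>) {1..m}"
          unfolding M_def using aps_M_bound(1)[OF b1, where p=p and c="c \<circ> \<tau>"] unfolding P_def by blast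
      qed
    next
      fix p assume pP: "p \<in> P"
      have tin: "\<tau> e \<in> {1..m}" if "e \<in> {1..m}" for e using tb that unfolding bij_betw_def by auto
      have sp: "sum (p \<circ> \<tau>) {1..m} = sum p {1..m}"
        using sum.reindex_bij_betw[OF tb, of p] by (simp add: comp_def)
      have p'P: "p \<circ> \<tau> \<in> P" using pP tin sp unfolding P_def by auto
      have sub: "{sum (c \<circ> \<tau>) S | S. S \<subseteq> {1..m} \<and> b \<le> sum (p \<circ> \<tau>) S} \<subseteq> {sum c S | S. S \<subseteq> {1..m} \<and> b \<le> sum p S}"
      proof
        fix x assume "x \<in> {sum (c \<circ> \<tau>) S | S. S \<subseteq> {1..m} \<and> b \<le> sum (p \<circ> \<tau>) S}"
        then obtain T where T: "T \<subseteq> {1..m}" "b \<le> sum (p \<circ> \<tau>) T" "x = sum (c \<circ> \<tau>) T" by blast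
        have inj: "inj_on \<tau> T" using tb T(1) unfolding bij_betw_def using inj_on_subset by blast
        have "\<tau> ` T \<subseteq> {1..m}" using T(1) tin by auto
        moreover have "sum c (\<tau> ` T) = x" using sum.reindex[OF inj, of c] T(3) by simp
        moreover have "sum p (\<tau> ` T) = sum (p \<circ> \<tau>) T" using sum.reindex[OF inj, of p] by simp
        ultimately show "x \<in> {sum c S | S. S \<subseteq> {1..m} \<and> b \<le> sum p S}" using T(2) by auto
      qed
      have "M c p \<le> M (c \<circ> \<tau>) (p \<circ> \<tau>)" unfolding M_def
      proof (rule Min_antimono[OF sub])
        show "{sum (c \<circ> \<tau>) S | S. S \<subseteq> {1..m} \<and> b \<le> sum (p \<circ> \<tau>) S} \<noteq> {}"
          using aps_M_bound(2)[OF b1, where p="p \<circ> \<tau>" and c="c \<circ> \<tau>"] p'P unfolding P_def by blast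
        show "finite {sum c S | S. S \<subseteq> {1..m} \<and> b \<le> sum p S}" by (rule aps_M_finite)
      qed
      then show "\<exists>q\<in>P. M c p \<le> M (c \<circ> \<tau>) q" using p'P by blast
    qed
  qed
qed

lemma aps_inv:
  assumes "b \<le> 1" "bij_betw \<tau> {1..m} {1..m}"
  shows "aps b m (c \<circ> \<tau>) = aps b m c"
  by (rule inv_from_ge[where s="aps b m"]) (use aps_cong aps_ge assms in auto)

lemma aps_nonneg:
  assumes b1: "b \<le> 1" and m: "0 < m" and dv: "disvaluation m c"
  shows "0 \<le> aps b m c"
proof -
  define P where "P = {p :: nat \<Rightarrow> real. (\<forall>e\<in>{1..m}. 0 \<le> p e) \<and> sum p {1..m} = 1}"
  define M where "M p = Min {sum c S | S. S \<subseteq> {1..m} \<and> b \<le> sum p S}" for p :: "nat \<Rightarrow> real"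
  have aa: "aps b m c = (SUP p\<in>P. M p)" unfolding aps_def P_def M_def by simp
  define p0 where "p0 = (\<lambda>e::nat. 1 / real m)"
  have p0P: "p0 \<in> P" using m unfolding P_def p0_def by auto
  have "0 \<le> M p0" unfolding M_def
  proof (subst Min_ge_iff)
    show "finite {sum c S | S. S \<subseteq> {1..m} \<and> b \<le> sum p0 S}" by (rule aps_M_finite)
    show "{sum c S | S. S \<subseteq> {1..m} \<and> b \<le> sum p0 S} \<noteq> {}" using aps_M_bound(2)[OF b1, where p=p0 and c=c] p0P unfolding P_def by blast
    show "\<forall>a\<in>{sum c S | S. S \<subseteq> {1..m} \<and> b \<le> sum p0 S}. 0 \<le> a"
      using dv unfolding disvaluation_def by (auto intro!: sum_nonneg)
  qed
  also have "M p0 \<le> (SUP p\<in>P. M p)"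
  proof (rule cSUP_upper[OF p0P], rule bdd_aboveI2[where M="sum c {1..m}"])
    fix p assume "p \<in> P"
    then show "M p \<le> sum c {1..m}"
      unfolding M_def using aps_M_bound(1)[OF b1, where p=p and c=c] unfolding P_def by blast
  qed
  finally show ?thesis using aa by simp
qed

lemma main_generic:
  fixes s :: "(nat \<Rightarrow> real) \<Rightarrow> real" and A :: "nat \<Rightarrow> nat set" and seq :: "nat \<Rightarrow> nat"
  assumes A3: "\<forall>j\<in>{1..n}. A j \<subseteq> {1..m}"
    and A5: "(\<Union>j\<in>{1..n}. A j) = {1..m}"
    and A6: "\<forall>r\<in>{1..m}. \<forall>j\<in>{1..n}. seq r = j \<longleftrightarrow> m + 1 - r \<in> A j"
    and iin: "i \<in> {1..n}"
    and inv: "\<And>c \<tau>. bij_betw \<tau> {1..m} {1..m} \<Longrightarrow> s (c \<circ> \<tau>) = s c"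
    and nonneg: "\<And>c. 0 < m \<Longrightarrow> disvaluation m c \<Longrightarrow> 0 \<le> s c"
  shows "rho_alloc s A i m = rho_pi s seq i m n"
proof (rule antisym)
  have seqin: "\<forall>r\<in>{1..m}. seq r \<in> {1..n}"
  proof
    fix r assume r: "r \<in> {1..m}"
    then have "m + 1 - r \<in> {1..m}" by auto
    then obtain j where "j \<in> {1..n}" "m + 1 - r \<in> A j" using A5 by blast
    moreover from this have "seq r = j" using A6 r by blast
    ultimately show "seq r \<in> {1..n}" by simp
  qed
  have Ai: "A i \<subseteq> {1..m}" using A3 iin by auto
  show "rho_alloc s A i m \<le> rho_pi s seq i m n"
    unfolding rho_alloc_def rho_pi_def
  proof (rule SUP_mono)
    fix c assume "c \<in> {c. disvaluation m c \<and> (\<forall>j k. 1 \<le> j \<longrightarrow> j < k \<longrightarrow> k \<le> m \<longrightarrow> c k \<le> c j)}"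
    then have dv: "disvaluation m c" and so: "\<forall>j k. 1 \<le> j \<longrightarrow> j < k \<longrightarrow> k \<le> m \<longrightarrow> c k \<le> c j" by auto
    define \<sigma> :: "nat \<Rightarrow> nat list \<Rightarrow> nat" where "\<sigma> = (\<lambda>j h. Max ({1..m} - set h))"
    have valid: "valid_strategy m (\<sigma> j)" for j
      unfolding valid_strategy_def
    proof (intro allI impI)
      fix h :: "nat list" assume h: "distinct h \<and> set h \<subseteq> {1..m} \<and> length h < m"
      then have "card (set h) < card {1..m}" by (simp add: distinct_card)
      then have "{1..m} - set h \<noteq> {}" using h by auto
      then show "\<sigma> j h \<in> {1..m} - set h" unfolding \<sigma>_def by (intro Max_in) auto
    qed
    have greedy: "greedy_strategy m c (\<sigma> i)"
      unfolding greedy_strategy_def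
    proof (intro conjI allI impI ballI)
      show "valid_strategy m (\<sigma> i)" by (rule valid)
    next
      fix h :: "nat list" and e assume h: "distinct h \<and> set h \<subseteq> {1..m} \<and> length h < m"
        and e: "e \<in> {1..m} - set h"
      have mi: "\<sigma> i h \<in> {1..m} - set h" using valid h unfolding valid_strategy_def by blast
      have "e \<le> \<sigma> i h" unfolding \<sigma>_def using e by (intro Max_ge) auto
      then show "c (\<sigma> i h) \<le> c e"
        using so e mi by (cases "e = \<sigma> i h") auto
    qed
    have pb: "picked_bundle seq \<sigma> m i = A i"
    proof -
      have "picked_bundle seq \<sigma> m i = {m - (r - 1) | r. r \<in> {1..m} \<and> seq r = i}"
      proof -
        have hn: "history seq \<sigma> m ! (r - 1) = m - (r - 1)" if "r \<in> {1..m}" for r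
        proof -
          have "r - 1 < m" using that by auto
          then show ?thesis unfolding \<sigma>_def using hist_max[of m m seq] by simp
        qed
        show ?thesis unfolding picked_bundle_def
        proof (intro equalityI subsetI)
          fix x assume "x \<in> {history seq \<sigma> m ! (r - 1) |r. r \<in> {1..m} \<and> seq r = i}"
          then obtain r where r: "r \<in> {1..m}" "seq r = i" "x = history seq \<sigma> m ! (r - 1)" by blast
          have "x = m - (r - 1)" by (rule trans[OF r(3) hn[OF r(1)]])
          then show "x \<in> {m - (r - 1) | r. r \<in> {1..m} \<and> seq r = i}" using r by blast
        next
          fix x assume "x \<in> {m - (r - 1) | r. r \<in> {1..m} \<and> seq r = i}"
          then obtain r where r: "r \<in> {1..m}" "seq r = i" "x = m - (r - 1)" by blast
          have "x = history seq \<sigma> m ! (r - 1)" by (rule trans[OF r(3) sym[OF hn[OF r(1)]]])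
          then show "x \<in> {history seq \<sigma> m ! (r - 1) |r. r \<in> {1..m} \<and> seq r = i}" using r by blast
        qed
      qed
      also have "\<dots> = A i"
      proof (intro equalityI subsetI)
        fix x assume "x \<in> {m - (r - 1) | r. r \<in> {1..m} \<and> seq r = i}"
        then obtain r where r: "r \<in> {1..m}" "seq r = i" "x = m - (r - 1)" by blast
        have "m + 1 - r \<in> A i" using A6 r(1,2) iin by blast
        moreover have "x = m + 1 - r" using r(1,3) by auto
        ultimately show "x \<in> A i" by simp
      next
        fix x assume x: "x \<in> A i"
        then have xm: "x \<in> {1..m}" using Ai by auto
        then have "m + 1 - x \<in> {1..m}" "m + 1 - (m + 1 - x) = x" by auto
        then have "seq (m + 1 - x) = i" using A6 iin x by metis
        moreover have "x = m - ((m + 1 - x) - 1)" using xm by auto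
        ultimately show "x \<in> {m - (r - 1) | r. r \<in> {1..m} \<and> seq r = i}"
          using \<open>m + 1 - x \<in> {1..m}\<close> by blast
      qed
      finally show ?thesis .
    qed
    show "\<exists>p\<in>{(c, \<sigma>). disvaluation m c \<and> greedy_strategy m c (\<sigma> i) \<and> (\<forall>j\<in>{1..n}. valid_strategy m (\<sigma> j))}.
            ereal (sum c (A i) / s c) \<le> (case p of (c, \<sigma>) \<Rightarrow> ereal (sum c (picked_bundle seq \<sigma> m i) / s c))"
      by (rule bexI[of _ "(c, \<sigma>)"]) (use dv greedy valid pb in auto)
  qed
  show "rho_pi s seq i m n \<le> rho_alloc s A i m"
    unfolding rho_alloc_def rho_pi_def
  proof (rule SUP_mono)
    fix p assume "p \<in> {(c, \<sigma>). disvaluation m c \<and> greedy_strategy m c (\<sigma> i) \<and> (\<forall>j\<in>{1..n}. valid_strategy m (\<sigma> j))}"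
    then obtain c \<sigma> where p: "p = (c, \<sigma>)" and dv: "disvaluation m c" and gr: "greedy_strategy m c (\<sigma> i)"
      and va: "\<forall>j\<in>{1..n}. valid_strategy m (\<sigma> j)" by blast
    obtain \<tau> where tb: "bij_betw \<tau> {1..m} {1..m}"
      and ts: "\<forall>j k. 1 \<le> j \<longrightarrow> j < k \<longrightarrow> k \<le> m \<longrightarrow> c (\<tau> k) \<le> c (\<tau> j)"
      using sorting_perm by blast
    define c' where "c' = c \<circ> \<tau>"
    have dv': "disvaluation m c'" using dv tb unfolding disvaluation_def c'_def bij_betw_def by auto
    have so': "\<forall>j k. 1 \<le> j \<longrightarrow> j < k \<longrightarrow> k \<le> m \<longrightarrow> c' k \<le> c' j" using ts unfolding c'_def by simp
    have seqi: "s c' = s c" unfolding c'_def using inv[OF tb] .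
    define H where "H = history seq \<sigma> m"
    define R where "R = {r\<in>{1..m}. seq r = i}"
    have finR: "finite R" unfolding R_def by simp
    have B: "picked_bundle seq \<sigma> m i = (\<lambda>r. H ! (r - 1)) ` R"
      unfolding picked_bundle_def H_def R_def by auto
    have Hg: "distinct H \<and> set H \<subseteq> {1..m}" unfolding H_def using hist_good[OF seqin va, of m] by simp
    have Hin: "H ! (r - 1) \<in> {1..m}" if "r \<in> {1..m}" for r
    proof -
      have "r - 1 < length H" using that unfolding H_def by auto
      then have "H ! (r - 1) \<in> set H" by (rule nth_mem)
      then show ?thesis using Hg by auto
    qed
    have key: "c (H ! (r - 1)) \<le> c' (m + 1 - r)" if rR: "r \<in> R" for r
    proof -
      have r: "r \<in> {1..m}" "seq r = i" using rR unfolding R_def by auto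
      define h where "h = history seq \<sigma> (r - 1)"
      have "H ! (r - 1) = \<sigma> (seq (Suc (r - 1))) h"
        unfolding H_def h_def using r(1) by (intro hist_nth) auto
      also have "Suc (r - 1) = r" using r(1) by auto
      finally have Hr: "H ! (r - 1) = \<sigma> i h" using r(2) by simp
      have hg: "distinct h \<and> set h \<subseteq> {1..m}" unfolding h_def using r(1) by (intro hist_good[OF seqin va]) auto
      have lh: "length h < m" "length h = r - 1" unfolding h_def using r(1) by auto
      let ?T = "\<tau> ` {m + 1 - r..m}"
      have injT: "inj_on \<tau> {m + 1 - r..m}"
      proof -
        have "{m + 1 - r..m} \<subseteq> {1..m}" using r(1) by auto
        then show ?thesis using tb unfolding bij_betw_def using inj_on_subset by blast
      qed
      have cardT: "card ?T = r" using card_image[OF injT] r(1) by auto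
      have TS: "?T \<subseteq> {1..m}"
      proof -
        have "{m + 1 - r..m} \<subseteq> {1..m}" using r(1) by auto
        then have "?T \<subseteq> \<tau> ` {1..m}" by (rule image_mono)
        then show ?thesis using tb unfolding bij_betw_def by simp
      qed
      have cardD: "card ({1..m} - set h) = m - (r - 1)"
        using hg lh by (simp add: card_Diff_subset distinct_card)
      have "?T \<inter> ({1..m} - set h) \<noteq> {}"
      proof
        assume e: "?T \<inter> ({1..m} - set h) = {}"
        have "card (?T \<union> ({1..m} - set h)) = card ?T + card ({1..m} - set h)"
          using e by (intro card_Un_disjoint) auto
        also have "\<dots> = m + 1" using cardT cardD r(1) by auto
        finally have "card (?T \<union> ({1..m} - set h)) = m + 1" .
        moreover have "card (?T \<union> ({1..m} - set h)) \<le> card {1..m}"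
          using TS by (intro card_mono) auto
        ultimately show False by simp
      qed
      then obtain k where k: "k \<in> {m + 1 - r..m}" "\<tau> k \<in> {1..m} - set h" by blast
      have "c (\<sigma> i h) \<le> c (\<tau> k)" using gr hg lh k(2) unfolding greedy_strategy_def by blast
      also have "c (\<tau> k) \<le> c (\<tau> (m + 1 - r))"
      proof (cases "k = m + 1 - r")
        case True then show ?thesis by simp
      next
        case False then show ?thesis using ts k(1) r(1) by auto
      qed
      finally show ?thesis using Hr unfolding c'_def by simp
    qed
    have sumle: "sum c (picked_bundle seq \<sigma> m i) \<le> sum c' (A i)"
    proof -
      have "sum c (picked_bundle seq \<sigma> m i) = sum c ((\<lambda>r. H ! (r - 1)) ` R)" using B by simp
      also have "\<dots> \<le> sum (c \<circ> (\<lambda>r. H ! (r - 1))) R"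
        using finR by (rule sum_image_le) (use dv Hin in \<open>auto simp: disvaluation_def R_def\<close>)
      also have "\<dots> \<le> sum (\<lambda>r. c' (m + 1 - r)) R"
        by (rule sum_mono) (use key in auto)
      also have "\<dots> = sum c' (A i)"
      proof -
        have inj: "inj_on (\<lambda>r. m + 1 - r) R" unfolding R_def by (rule inj_onI) auto
        have img: "(\<lambda>r. m + 1 - r) ` R = A i"
        proof (intro equalityI subsetI)
          fix x assume "x \<in> (\<lambda>r. m + 1 - r) ` R"
          then obtain r where "r \<in> R" "x = m + 1 - r" by blast
          then show "x \<in> A i" using A6 iin unfolding R_def by blast
        next
          fix x assume x: "x \<in> A i"
          then have xm: "x \<in> {1..m}" using Ai by auto
          then have "m + 1 - x \<in> {1..m}" "m + 1 - (m + 1 - x) = x" by auto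
          then have "seq (m + 1 - x) = i" using A6 iin x by metis
          then have "m + 1 - x \<in> R" unfolding R_def using \<open>m + 1 - x \<in> {1..m}\<close> by simp
          then show "x \<in> (\<lambda>r. m + 1 - r) ` R" using \<open>m + 1 - (m + 1 - x) = x\<close> by (metis image_eqI)
        qed
        show ?thesis using sum.reindex[OF inj, of c'] img by (simp add: comp_def)
      qed
      finally show ?thesis .
    qed
    have "sum c (picked_bundle seq \<sigma> m i) / s c \<le> sum c' (A i) / s c'"
    proof (cases "m = 0")
      case True
      then have "R = {}" unfolding R_def by auto
      then have "picked_bundle seq \<sigma> m i = {}" using B by simp
      moreover have "A i = {}" using Ai True by auto
      ultimately show ?thesis by simp
    next
      case False
      then have "0 \<le> s c" using nonneg dv by simp
      then show ?thesis using sumle seqi by (simp add: divide_right_mono)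
    qed
    then show "\<exists>q\<in>{c. disvaluation m c \<and> (\<forall>j k. 1 \<le> j \<longrightarrow> j < k \<longrightarrow> k \<le> m \<longrightarrow> c k \<le> c j)}.
            (case p of (c, \<sigma>) \<Rightarrow> ereal (sum c (picked_bundle seq \<sigma> m i) / s c)) \<le> ereal (sum q (A i) / s q)"
      using dv' so' p by (intro bexI[of _ c']) auto
  qed
qed


theorem corollary3:
  fixes n m i :: nat and b :: "nat \<Rightarrow> real" and A :: "nat \<Rightarrow> nat set" and seq :: "nat \<Rightarrow> nat"
  assumes "\<forall>j\<in>{1..n}. 0 < b j"
    and "(\<Sum>j=1..n. b j) = 1"
    and "\<forall>j\<in>{1..n}. A j \<subseteq> {1..m}"
    and "\<forall>j\<in>{1..n}. \<forall>k\<in>{1..n}. j \<noteq> k \<longrightarrow> A j \<inter> A k = {}"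
    and "(\<Union>j\<in>{1..n}. A j) = {1..m}"
    and "\<forall>r\<in>{1..m}. \<forall>j\<in>{1..n}. seq r = j \<longleftrightarrow> m + 1 - r \<in> A j"
    and "i \<in> {1..n}"
  shows "rho_alloc (aps (b i) m) A i m = rho_pi (aps (b i) m) seq i m n
       \<and> rho_alloc (cs (b i) m) A i m = rho_pi (cs (b i) m) seq i m n
       \<and> ((\<forall>j\<in>{1..n}. b j = 1 / real n) \<longrightarrow>
            rho_alloc (mms n m) A i m = rho_pi (mms n m) seq i m n)"
proof -
  have pos: "0 < b i" using assms(1,7) by blast
  have "b i \<le> (\<Sum>j=1..n. b j)"
    by (rule member_le_sum) (use assms(1,7) in \<open>auto intro: less_imp_le\<close>)
  then have b1: "b i \<le> 1" using assms(2) by simp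
  have n1: "1 \<le> n" using assms(7) by auto
  have c1: "rho_alloc (aps (b i) m) A i m = rho_pi (aps (b i) m) seq i m n"
    by (rule main_generic[OF assms(3,5,6,7)]) (use aps_inv[OF b1] aps_nonneg[OF b1] in auto)
  have c2: "rho_alloc (cs (b i) m) A i m = rho_pi (cs (b i) m) seq i m n"
    by (rule main_generic[OF assms(3,5,6,7)]) (use cs_inv cs_nonneg[OF pos] in auto)
  have c3: "rho_alloc (mms n m) A i m = rho_pi (mms n m) seq i m n"
    by (rule main_generic[OF assms(3,5,6,7)]) (use mms_inv mms_nonneg[OF n1] in auto)
  show ?thesis using c1 c2 c3 by blast
qed

end
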